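(* Let $\vec\lambda,\vec\mu\in\mathcal P_{m,\ell}$ with $\|\vec\lambda\|=\|\vec\mu\|$. Fix $\lambda\in\mathfrak S\cdot\vec\lambda^{\mathtt{tot}}$, where $\mathfrak S=(\mathfrak S_n)^{\ell}\subset\mathfrak S_{n\ell}$ (the $k$-th factor permuting the indices $(k-1)n+1,\dots,kn$) acts on $\mathbb Z^{n\ell}$ by permuting coordinates. If $\vec\mu^{\mathtt{tot}}\in\lambda+\mathbb Z^{n\ell}_+$, then $\vec\mu\unlhd\vec\lambda$.
   Context: Fix integers $\ell>1$, $n\ge m\ge1$. Partitions have at most $n$ parts, written $\lambda=(\lambda_1\ge\dots\ge\lambda_n\ge0)$; the dominance order on partitions of $m$ is $\lambda\le\mu$ iff $\sum_{j\le k}\lambda_j\le\sum_{j\le k}\mu_j$ for all $k$. An $\ell$-partition of $m$ is $\vec\lambda=(\lambda^{(1)},\dots,\lambda^{(\ell)})$ with $\sum_k|\lambda^{(k)}|=m$; $\mathcal P_{m,\ell}$ denotes the set of these. Define $\vec\lambda^{\mathtt{tot}}\in\mathbb Z_{\ge0}^{n\ell}$ as the concatenation $(\lambda^{(1)}_n,\lambda^{(1)}_{n-1},\dots,\lambda^{(1)}_1,\lambda^{(2)}_n,\dots,\lambda^{(2)}_1,\dots,\lambda^{(\ell)}_n,\dots,\lambda^{(\ell)}_1)$, and $\|\vec\lambda\|$ as the partition of $m$ obtained by sorting all parts of all $\lambda^{(k)}$. With $\{\varepsilon_i\}$ the standard basis of $\mathbb Z^{n\ell}$, let $\mathbb Z^{n\ell}_+=\big(\sum_{1\le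 i<j\le n\ell}\mathbb Z_{\ge0}(\varepsilon_i-\varepsilon_j)\big)\setminus\{0\}$. Define $\vec\lambda\lhd\vec\mu$ iff either $\|\vec\lambda\|<\|\vec\mu\|$ (strictly in dominance), or $\|\vec\lambda\|=\|\vec\mu\|$ and $\vec\lambda^{\mathtt{tot}}-\vec\mu^{\mathtt{tot}}\in\mathbb Z^{n\ell}_+$; $\unlhd$ means $\lhd$ or $=$. *)

theory Defs
  imports "HOL-Combinatorics.Permutations"
begin

text \<open>An l-multipartition is encoded as L :: nat => nat => nat, where
  L k i is the (i+1)-th part of the (k+1)-th component (0-indexed), for k < l, i < n;
  all other values are 0.\<close>
definition is_multipart :: "nat \<Rightarrow> nat \<Rightarrow> nat \<Rightarrow> (nat \<Rightarrow> nat \<Rightarrow> nat) \<Rightarrow> bool" where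
  "is_multipart n l m L \<longleftrightarrow>
     (\<forall>k i. (k \<ge> l \<or> i \<ge> n) \<longrightarrow> L k i = 0) \<and>
     (\<forall>k i j. i \<le> j \<longrightarrow> L k j \<le> L k i) \<and>
     (\<Sum>k<l. \<Sum>i<n. L k i) = m"

text \<open>The vector tot in Z^(n l), 0-indexed: position k*n + j holds the (n-j)-th part
  (1-indexed) of the (k+1)-th component; zero outside {..<n*l}.\<close>
definition tot :: "nat \<Rightarrow> nat \<Rightarrow> (nat \<Rightarrow> nat \<Rightarrow> nat) \<Rightarrow> nat \<Rightarrow> int" where
  "tot n l L i = (if i < n * l then int (L (i div n) (n - 1 - i mod n)) else 0)"

definition mp_norm :: "nat \<Rightarrow> nat \<Rightarrow> (nat \<Rightarrow> nat \<Rightarrow> nat) \<Rightarrow> nat list" where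
  "mp_norm n l L = rev (sort (map (\<lambda>i. L (i div n) (i mod n)) [0..<n * l]))"

definition dom_le :: "nat list \<Rightarrow> nat list \<Rightarrow> bool" where
  "dom_le a b \<longleftrightarrow> (\<forall>k. sum_list (take k a) \<le> sum_list (take k b))"

definition dom_lt :: "nat list \<Rightarrow> nat list \<Rightarrow> bool" where
  "dom_lt a b \<longleftrightarrow> dom_le a b \<and> a \<noteq> b"

text \<open>Z^N_+ : nonzero elements of the cone spanned by e_a - e_b, a < b < N.\<close>
definition Zplus :: "nat \<Rightarrow> (nat \<Rightarrow> int) \<Rightarrow> bool" where
  "Zplus N v \<longleftrightarrow> v \<noteq> (\<lambda>_. 0) \<and>
     (\<exists>c :: nat \<Rightarrow> nat \<Rightarrow> int. (\<forall>a b. 0 \<le> c a b) \<and>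
        v = (\<lambda>i. \<Sum>a<N. \<Sum>b<N. if a < b then
               c a b * ((if i = a then 1 else 0) - (if i = b then 1 else 0)) else 0))"

definition mp_less :: "nat \<Rightarrow> nat \<Rightarrow> (nat \<Rightarrow> nat \<Rightarrow> nat) \<Rightarrow> (nat \<Rightarrow> nat \<Rightarrow> nat) \<Rightarrow> bool" where
  "mp_less n l L M \<longleftrightarrow> dom_lt (mp_norm n l L) (mp_norm n l M) \<or>
     (mp_norm n l L = mp_norm n l M \<and> Zplus (n * l) (\<lambda>i. tot n l L i - tot n l M i))"

definition mp_le :: "nat \<Rightarrow> nat \<Rightarrow> (nat \<Rightarrow> nat \<Rightarrow> nat) \<Rightarrow> (nat \<Rightarrow> nat \<Rightarrow> nat) \<Rightarrow> bool" where
  "mp_le n l L M \<longleftrightarrow> mp_less n l L M \<or> L = M"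

end

theory Submission imports Defs begin

lemma swap_sum:
  fixes f :: "'a \<Rightarrow> int"
  assumes "finite X" "finite Y" "card X = card Y" "\<forall>x\<in>X. \<forall>y\<in>Y. f y \<le> f x"
  shows "sum f Y \<le> sum f X"
proof (cases "X = {}")
  case True then show ?thesis using assms by simp
next
  case False
  define t where "t = Min (f ` X)"
  have tx: "\<forall>x\<in>X. t \<le> f x" using assms(1) by (auto simp: t_def)
  have ty: "\<forall>y\<in>Y. f y \<le> t"
  proof
    fix y assume "y \<in> Y"
    have "t \<in> f ` X" using False assms(1) unfolding t_def by (intro Min_in) auto
    then show "f y \<le> t" using assms(4) \<open>y \<in> Y\<close> by auto
  qed
  have "sum f Y \<le> of_nat (card Y) * t" using sum_bounded_above[of Y f t] ty by auto
  also have "\<dots> = of_nat (card X) * t" using assms by simp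
  also have "\<dots> \<le> sum f X" using sum_bounded_below[of X t f] tx by auto
  finally show ?thesis .
qed

lemma prefix_perm:
  fixes T :: "nat \<Rightarrow> int"
  assumes sp: "\<sigma> permutes {..<N}" and bl: "\<forall>i < N. \<sigma> i div n = i div n"
    and mono: "\<forall>y x. y < x \<longrightarrow> x < N \<longrightarrow> y div n = x div n \<longrightarrow> T y \<le> T x"
  shows "(\<Sum>i<k. T i) \<le> (\<Sum>i<k. T (\<sigma> i))"
proof -
  define A where "A = \<sigma> ` {..<k}"
  define B where "B = {..<k::nat}"
  have inj: "inj \<sigma>" using sp permutes_inj by blast
  have out: "\<And>i. i \<notin> {..<N} \<Longrightarrow> \<sigma> i = i" using sp unfolding permutes_def by blast
  have inN: "\<And>i. i < N \<Longrightarrow> \<sigma> i < N" using sp permutes_in_image by fastforce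
  have s1: "(\<Sum>i<k. T (\<sigma> i)) = sum T A"
    unfolding A_def by (subst sum.reindex) (auto intro: inj_on_subset[OF inj])
  have fA: "finite A" "finite B" by (auto simp: A_def B_def)
  have cAB: "card A = card B" unfolding A_def B_def
    by (subst card_image) (auto intro: inj_on_subset[OF inj])
  have cd: "card (A - B) = card (B - A)"
  proof -
    have "card (A - B) = card A - card (A \<inter> B)" using fA by (simp add: card_Diff_subset_Int)
    moreover have "card (B - A) = card B - card (A \<inter> B)" using fA by (simp add: card_Diff_subset_Int Int_commute)
    ultimately show ?thesis using cAB by simp
  qed
  have cmp: "\<forall>x\<in>A - B. \<forall>y\<in>B - A. T y \<le> T x"
  proof (intro ballI)
    fix x y assume x: "x \<in> A - B" and y: "y \<in> B - A"
    obtain i where i: "i < k" "x = \<sigma> i" using x by (auto simp: A_def)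
    have xk: "k \<le> x" using x by (auto simp: B_def)
    have iN: "i < N"
    proof (rule ccontr)
      assume "\<not> i < N" then have "\<sigma> i = i" using out by auto
      then show False using i xk by simp
    qed
    have xN: "x < N" using inN iN i by simp
    have yk: "y < k" and yA: "y \<notin> \<sigma> ` {..<k}" using y by (auto simp: A_def B_def)
    have yN: "y < N"
    proof (rule ccontr)
      assume "\<not> y < N" then have "\<sigma> y = y" using out by auto
      then show False using yA yk by (metis image_eqI lessThan_iff)
    qed
    obtain j where j: "j < N" "\<sigma> j = y"
      using sp yN by (metis lessThan_iff permutes_def)
    have jk: "k \<le> j" using j yA by (metis image_eqI lessThan_iff not_le)
    have "y div n = j div n" using bl j by metis
    moreover have "x div n = i div n" using bl iN i by metis
    moreover have "i div n \<le> j div n" using i jk by (intro div_le_mono) simp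
    moreover have "y div n \<le> x div n" using yk xk by (intro div_le_mono) simp
    ultimately have "y div n = x div n" by simp
    then show "T y \<le> T x" using mono yk xk xN by auto
  qed
  have "sum T B = sum T (A \<inter> B) + sum T (B - A)"
    using fA by (metis Int_commute sum.Int_Diff)
  also have "\<dots> \<le> sum T (A \<inter> B) + sum T (A - B)"
    using swap_sum[of "A - B" "B - A" T] cd cmp fA by auto
  also have "\<dots> = sum T A" using fA by (metis sum.Int_Diff)
  finally show ?thesis using s1 by (simp add: B_def)
qed

lemma Zplus_prefix:
  assumes "Zplus N v"
  shows "0 \<le> (\<Sum>i<k. v i)" "(\<Sum>i<N. v i) = 0"
proof -
  obtain c :: "nat \<Rightarrow> nat \<Rightarrow> int" where c0: "\<forall>a b. 0 \<le> c a b" and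
    v: "v = (\<lambda>i. \<Sum>a<N. \<Sum>b<N. if a < b then
               c a b * ((if i = a then 1 else 0) - (if i = b then 1 else 0)) else 0)"
    using assms unfolding Zplus_def by blast
  have key: "(\<Sum>i<K. v i) = (\<Sum>a<N. \<Sum>b<N. if a < b then
               c a b * ((if a < K then 1 else 0) - (if b < K then 1 else 0)) else 0)" for K
  proof -
    have "(\<Sum>i<K. v i) = (\<Sum>a<N. \<Sum>b<N. \<Sum>i<K. if a < b then
               c a b * ((if i = a then 1 else 0) - (if i = b then 1 else 0)) else 0)"
      unfolding v by (simp add: sum.swap[of _ "{..<K}"])
    also have "\<dots> = (\<Sum>a<N. \<Sum>b<N. if a < b then
               c a b * ((if a < K then 1 else 0) - (if b < K then 1 else 0)) else 0)"
      by (intro sum.cong refl) (auto simp: sum_subtractf sum_distrib_left[symmetric])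
    finally show ?thesis .
  qed
  show "0 \<le> (\<Sum>i<k. v i)" unfolding key
    by (intro sum_nonneg) (auto simp: c0)
  show "(\<Sum>i<N. v i) = 0" unfolding key by (intro sum.neutral ballI) auto
qed
lemma Zplus_of_prefix:
  fixes v :: "nat \<Rightarrow> int"
  assumes z: "\<forall>i\<ge>N. v i = 0" and p: "\<forall>k. 0 \<le> (\<Sum>i<k. v i)"
    and t: "(\<Sum>i<N. v i) = 0" and nz: "v \<noteq> (\<lambda>_. 0)"
  shows "Zplus N v"
proof -
  define S where "S k = (\<Sum>i<k. v i)" for k
  define c where "c a b = (if b = Suc a then S (Suc a) else 0)" for a b
  have c0: "\<forall>a b. 0 \<le> c a b" using p unfolding c_def S_def by (metis order_refl)
  have "v i = (\<Sum>a<N. \<Sum>b<N. if a < b then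
               c a b * ((if i = a then 1 else 0) - (if i = b then 1 else 0)) else 0)" for i
  proof -
    have inner: "(\<Sum>b<N. if a < b then
               c a b * ((if i = a then 1 else 0) - (if i = b then 1 else 0)) else 0)
       = (if Suc a < N then S (Suc a) * ((if i = a then 1 else 0) - (if i = Suc a then 1 else 0)) else 0)" for a
    proof -
      have "(\<Sum>b<N. if a < b then
               c a b * ((if i = a then 1 else 0) - (if i = b then 1 else 0)) else 0)
         = (\<Sum>b<N. if b = Suc a then S (Suc a) * ((if i = a then 1 else 0) - (if i = Suc a then 1 else 0)) else 0)"
        by (intro sum.cong refl) (auto simp: c_def)
      also have "\<dots> = (if Suc a < N then S (Suc a) * ((if i = a then 1 else 0) - (if i = Suc a then 1 else 0)) else 0)" by (simp add: sum.delta)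
      finally show ?thesis by simp
    qed
    have "(\<Sum>a<N. \<Sum>b<N. if a < b then
               c a b * ((if i = a then 1 else 0) - (if i = b then 1 else 0)) else 0)
        = (\<Sum>a<N. (if Suc a < N \<and> a = i then S (Suc a) else 0)) - (\<Sum>a<N. (if Suc a < N \<and> Suc a = i then S (Suc a) else 0))"
      unfolding inner by (subst sum_subtractf[symmetric]) (intro sum.cong refl, auto)
    also have "\<dots> = (if Suc i < N then S (Suc i) else 0) - (if 0 < i \<and> i < N then S i else 0)"
    proof -
      have 1: "(\<Sum>a<N. (if Suc a < N \<and> a = i then S (Suc a) else 0)) = (if Suc i < N then S (Suc i) else 0)"
        by (subst sum.cong[OF refl, of _ _ "\<lambda>a. if a = i then (if Suc i < N then S (Suc i) else 0) else 0"])
           (auto simp: sum.delta)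
      have 2: "(\<Sum>a<N. (if Suc a < N \<and> Suc a = i then S (Suc a) else 0)) = (if 0 < i \<and> i < N then S i else 0)"
      proof (cases i)
        case 0 then show ?thesis by simp
      next
        case (Suc j)
        show ?thesis
          by (subst sum.cong[OF refl, of _ _ "\<lambda>a. if a = j then (if Suc j < N then S (Suc j) else 0) else 0"])
             (auto simp: sum.delta Suc)
      qed
      show ?thesis using 1 2 by simp
    qed
    also have "\<dots> = v i"
    proof -
      have SN: "S N = 0" using t by (simp add: S_def)
      have Ss: "S (Suc k) = S k + v k" for k by (simp add: S_def)
      show ?thesis
      proof (cases "i < N")
        case False then show ?thesis using z by simp
      next
        case True
        show ?thesis
        proof (cases "Suc i < N")
          case True then show ?thesis using Ss[of i] by (cases i) (auto simp: S_def)
        next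
          case False
          with \<open>i < N\<close> have "N = Suc i" by simp
          then show ?thesis using SN Ss[of i] by (cases i) (auto simp: S_def)
        qed
      qed
    qed
    finally show ?thesis by simp
  qed
  then show ?thesis unfolding Zplus_def using nz c0 by blast
qed
theorem lemma1p3:
  fixes n l m :: nat and La Mu :: "nat \<Rightarrow> nat \<Rightarrow> nat" and \<sigma> :: "nat \<Rightarrow> nat"
  assumes "l > 1" and "1 \<le> m" and "m \<le> n"
    and "is_multipart n l m La" and "is_multipart n l m Mu"
    and "mp_norm n l La = mp_norm n l Mu"
    and "\<sigma> permutes {..<n * l}" and "\<forall>i < n * l. \<sigma> i div n = i div n"
    and "Zplus (n * l) (\<lambda>i. tot n l Mu i - tot n l La (\<sigma> i))"
  shows "mp_le n l Mu La"
proof -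
  define N where "N = n * l"
  define T where "T = tot n l La"
  define U where "U = tot n l Mu"
  define v where "v i = U i - T i" for i
  have sp: "\<sigma> permutes {..<N}" and bl: "\<forall>i < N. \<sigma> i div n = i div n"
    using assms(7,8) by (auto simp: N_def)
  have zw: "Zplus N (\<lambda>i. U i - T (\<sigma> i))" using assms(9) by (simp add: N_def U_def T_def)
  have dec: "\<And>k i j. i \<le> j \<Longrightarrow> La k j \<le> La k i" using assms(4) unfolding is_multipart_def by blast
  have mono: "\<forall>y x. y < x \<longrightarrow> x < N \<longrightarrow> y div n = x div n \<longrightarrow> T y \<le> T x"
  proof (intro allI impI)
    fix y x assume yx: "y < x" and xN: "x < N" and d: "y div n = x div n"
    have "y mod n \<le> x mod n"
    proof -
      have "y = y div n * n + y mod n" "x = x div n * n + x mod n" by simp_all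
      moreover have "y div n * n = x div n * n" using d by simp
      ultimately show ?thesis using yx by linarith
    qed
    then have "La (x div n) (n - 1 - y mod n) \<le> La (x div n) (n - 1 - x mod n)"
      by (intro dec) simp
    then show "T y \<le> T x" using yx xN d by (simp add: T_def tot_def N_def)
  qed
  have v0: "\<forall>i\<ge>N. v i = 0" by (simp add: v_def U_def T_def tot_def N_def)
  have pv: "\<forall>k. 0 \<le> (\<Sum>i<k. v i)"
  proof
    fix k
    have "0 \<le> (\<Sum>i<k. U i - T (\<sigma> i))" using Zplus_prefix(1)[OF zw] .
    also have "\<dots> = (\<Sum>i<k. U i) - (\<Sum>i<k. T (\<sigma> i))" by (simp add: sum_subtractf)
    also have "\<dots> \<le> (\<Sum>i<k. U i) - (\<Sum>i<k. T i)" using prefix_perm[OF sp bl mono, of k] by simp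
    also have "\<dots> = (\<Sum>i<k. v i)" by (simp add: v_def sum_subtractf)
    finally show "0 \<le> (\<Sum>i<k. v i)" .
  qed
  have tv: "(\<Sum>i<N. v i) = 0"
  proof -
    have "(\<Sum>i<N. T (\<sigma> i)) = (\<Sum>i<N. T i)"
      using sum.permute[OF sp, of T] by (simp add: comp_def)
    then have "(\<Sum>i<N. v i) = (\<Sum>i<N. U i - T (\<sigma> i))" by (simp add: v_def sum_subtractf)
    then show ?thesis using Zplus_prefix(2)[OF zw] by simp
  qed
  show ?thesis
  proof (cases "v = (\<lambda>_. 0)")
    case False
    have "Zplus N v" by (rule Zplus_of_prefix[OF v0 pv tv False])
    then show ?thesis using assms(6) unfolding mp_le_def mp_less_def
      by (simp add: v_def[abs_def] U_def T_def N_def)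
  next
    case vz: True
    have "Mu = La"
    proof (intro ext)
      fix k i
      show "Mu k i = La k i"
      proof (cases "k < l \<and> i < n")
        case False
        then show ?thesis using assms(4,5) unfolding is_multipart_def by (metis not_le)
      next
        case True
        define x where "x = k * n + (n - 1 - i)"
        define r where "r = n - 1 - i"
        have r: "r < n" using True by (simp add: r_def)
        have "x = r + k * n" by (simp add: x_def r_def)
        then have xd: "x div n = k" and xm: "x mod n = n - 1 - i" using r
          by (simp_all add: r_def)
        have xN: "x < n * l"
        proof -
          have "x < k * n + n" using True by (simp add: x_def)
          also have "\<dots> = Suc k * n" by simp
          also have "\<dots> \<le> l * n" using True by (intro mult_le_mono1) simp
          finally show ?thesis by (simp add: mult.commute)
        qed
        have "v x = 0" using vz by simp
        then show ?thesis using xd xm xN True by (simp add: v_def U_def T_def tot_def)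
      qed
    qed
    then show ?thesis by (simp add: mp_le_def)
  qed
qed

end
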